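(* Let $S$ be a semiring and $P$ a left $S$-semimodule. (1) For every left $S$-semimodule $M$, $P$ is $M$-$e$-projective if and only if $P$ is normally $M$-projective. (2) $P$ is $e$-projective if and only if $P$ is normally projective.
   Context: A semiring $(S,+,0,\cdot,1)$ consists of a commutative monoid $(S,+,0)$ and a monoid $(S,\cdot,1)$ with $0\neq 1$, absorbing zero and both distributive laws; left $S$-semimodules and $S$-linear maps are as for modules without subtraction; $\mathrm{Hom}_S(P,X)$ is a commutative monoid under pointwise addition. For an $S$-linear $h:X\to Y$, $\mathrm{Ker}(h)=\{x\mid h(x)=0\}$; $h$ is $k$-normal if $h(x)=h(x')$ implies $x+k=x'+k'$ for some $k,k'\in\mathrm{Ker}(h)$; a normal epimorphism is a surjective $k$-normal map. A short exact sequence $0\to L\xrightarrow{f}M\xrightarrow{g}N\to 0$ (of semimodules or of commutative monoids) means: $f$ injective, $f(L)=\mathrm{Ker}(g)$, $g$ surjective and $k$-normal. $P$ is $M$-$e$-projective if for every short exact sequence $0\to L\xrightarrow{f}M\xrightarrow{g}N\to0$ of left $S$-semimodules (with middle term $M$), the sequence $0\to\mathrm{Hom}_S(P,L)\xrightarrow{f\circ-}\mathrm{Hom}_S(P,M)\xrightarrow{g\circ-}\mathrm{Hom}_S(P,N)\to0$ is a short exact sequence of commutative monoids; $P$ is $e$-projective if it is $M$-$e$-projective for all $M$. $P$ is normally $M$-projective if for every normal epimorphism $f:M\to N$ and every $S$-linear $g:P\to N$ there is an $S$-linear $h:P\to M$ with $f\circ h=g$, and whenever $h':P\to M$ is $S$-linear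 with $f\circ h'=g$, there exist $S$-linear $h_1,h_2:P\to M$ with $f\circ h_1=0=f\circ h_2$ and $h+h_1=h'+h_2$; $P$ is normally projective if normally $M$-projective for all $M$. *)

theory Defs
  imports "HOL-Library.FuncSet"
begin

record 'a cmon =
  car :: "'a set"
  add :: "'a \<Rightarrow> 'a \<Rightarrow> 'a"
  zer :: "'a"

record ('a, 's) semimodule = "'a cmon" +
  smult :: "'s \<Rightarrow> 'a \<Rightarrow> 'a"

definition comm_monoid_on :: "('a, 'z) cmon_scheme \<Rightarrow> bool" where
  "comm_monoid_on A \<longleftrightarrow>
     zer A \<in> car A \<and>
     (\<forall>x\<in>car A. \<forall>y\<in>car A. add A x y \<in> car A) \<and>
     (\<forall>x\<in>car A. \<forall>y\<in>car A. \<forall>z\<in>car A. add A (add A x y) z = add A x (add A y z)) \<and>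
     (\<forall>x\<in>car A. \<forall>y\<in>car A. add A x y = add A y x) \<and>
     (\<forall>x\<in>car A. add A (zer A) x = x)"

definition semimodule :: "('a, 's::semiring_1) semimodule \<Rightarrow> bool" where
  "semimodule M \<longleftrightarrow> comm_monoid_on M \<and>
     (\<forall>s. \<forall>x\<in>car M. smult M s x \<in> car M) \<and>
     (\<forall>s. \<forall>x\<in>car M. \<forall>y\<in>car M. smult M s (add M x y) = add M (smult M s x) (smult M s y)) \<and>
     (\<forall>s t. \<forall>x\<in>car M. smult M (s + t) x = add M (smult M s x) (smult M t x)) \<and>
     (\<forall>s t. \<forall>x\<in>car M. smult M (s * t) x = smult M s (smult M t x)) \<and>
     (\<forall>x\<in>car M. smult M 1 x = x) \<and>
     (\<forall>x\<in>car M. smult M 0 x = zer M) \<and>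
     (\<forall>s. smult M s (zer M) = zer M)"

definition slinear :: "('a, 's) semimodule \<Rightarrow> ('b, 's) semimodule \<Rightarrow> ('a \<Rightarrow> 'b) \<Rightarrow> bool" where
  "slinear M N h \<longleftrightarrow> h \<in> car M \<rightarrow> car N \<and>
     (\<forall>x\<in>car M. \<forall>y\<in>car M. h (add M x y) = add N (h x) (h y)) \<and>
     (\<forall>s. \<forall>x\<in>car M. h (smult M s x) = smult N s (h x))"

definition mon_hom :: "('a, 'z) cmon_scheme \<Rightarrow> ('b, 'w) cmon_scheme \<Rightarrow> ('a \<Rightarrow> 'b) \<Rightarrow> bool" where
  "mon_hom A B h \<longleftrightarrow> h \<in> car A \<rightarrow> car B \<and>
     (\<forall>x\<in>car A. \<forall>y\<in>car A. h (add A x y) = add B (h x) (h y)) \<and> h (zer A) = zer B"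

definition Ker :: "('a, 'z) cmon_scheme \<Rightarrow> ('b, 'w) cmon_scheme \<Rightarrow> ('a \<Rightarrow> 'b) \<Rightarrow> 'a set" where
  "Ker A B h = {x \<in> car A. h x = zer B}"

definition k_normal :: "('a, 'z) cmon_scheme \<Rightarrow> ('b, 'w) cmon_scheme \<Rightarrow> ('a \<Rightarrow> 'b) \<Rightarrow> bool" where
  "k_normal A B h \<longleftrightarrow> (\<forall>x\<in>car A. \<forall>x'\<in>car A. h x = h x' \<longrightarrow>
     (\<exists>k\<in>Ker A B h. \<exists>k'\<in>Ker A B h. add A x k = add A x' k'))"

definition exact_conds :: "('l, 'z1) cmon_scheme \<Rightarrow> ('m, 'z2) cmon_scheme \<Rightarrow> ('n, 'z3) cmon_scheme
     \<Rightarrow> ('l \<Rightarrow> 'm) \<Rightarrow> ('m \<Rightarrow> 'n) \<Rightarrow> bool" where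
  "exact_conds L M N f g \<longleftrightarrow> inj_on f (car L) \<and> f ` car L = Ker M N g \<and>
     g ` car M = car N \<and> k_normal M N g"

definition ses_mon :: "'l cmon \<Rightarrow> 'm cmon \<Rightarrow> 'n cmon \<Rightarrow> ('l \<Rightarrow> 'm) \<Rightarrow> ('m \<Rightarrow> 'n) \<Rightarrow> bool" where
  "ses_mon L M N f g \<longleftrightarrow> comm_monoid_on L \<and> comm_monoid_on M \<and> comm_monoid_on N \<and>
     mon_hom L M f \<and> mon_hom M N g \<and> exact_conds L M N f g"

definition ses_sm :: "('l, 's::semiring_1) semimodule \<Rightarrow> ('m, 's) semimodule \<Rightarrow> ('n, 's) semimodule
     \<Rightarrow> ('l \<Rightarrow> 'm) \<Rightarrow> ('m \<Rightarrow> 'n) \<Rightarrow> bool" where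
  "ses_sm L M N f g \<longleftrightarrow> semimodule L \<and> semimodule M \<and> semimodule N \<and>
     slinear L M f \<and> slinear M N g \<and> exact_conds L M N f g"

definition Hom :: "('p, 's) semimodule \<Rightarrow> ('x, 's) semimodule \<Rightarrow> ('p \<Rightarrow> 'x) cmon" where
  "Hom P X = \<lparr> car = {h. slinear P X h \<and> h \<in> extensional (car P)},
              add = (\<lambda>h k. \<lambda>x\<in>car P. add X (h x) (k x)),
              zer = (\<lambda>x\<in>car P. zer X) \<rparr>"

definition postcomp :: "('p, 's) semimodule \<Rightarrow> ('x \<Rightarrow> 'y) \<Rightarrow> ('p \<Rightarrow> 'x) \<Rightarrow> ('p \<Rightarrow> 'y)" where
  "postcomp P f h = (\<lambda>x\<in>car P. f (h x))"

text \<open>M-e-projectivity; the itself-arguments fix the types in which L and N range.\<close>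
definition M_e_projective :: "'l itself \<Rightarrow> 'n itself \<Rightarrow> ('p, 's::semiring_1) semimodule
     \<Rightarrow> ('m, 's) semimodule \<Rightarrow> bool" where
  "M_e_projective _ _ P M \<longleftrightarrow>
     (\<forall>(L::('l, 's) semimodule) (N::('n, 's) semimodule) f g.
        ses_sm L M N f g \<longrightarrow>
        ses_mon (Hom P L) (Hom P M) (Hom P N) (postcomp P f) (postcomp P g))"

definition e_projective :: "'l itself \<Rightarrow> 'm itself \<Rightarrow> 'n itself \<Rightarrow> ('p, 's::semiring_1) semimodule \<Rightarrow> bool" where
  "e_projective ty_l _ ty_n P \<longleftrightarrow>
     (\<forall>M::('m, 's) semimodule. semimodule M \<longrightarrow> M_e_projective ty_l ty_n P M)"

definition normal_epi :: "('m, 's) semimodule \<Rightarrow> ('n, 's) semimodule \<Rightarrow> ('m \<Rightarrow> 'n) \<Rightarrow> bool" where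
  "normal_epi M N f \<longleftrightarrow> slinear M N f \<and> f ` car M = car N \<and> k_normal M N f"

definition normally_M_projective :: "'n itself \<Rightarrow> ('p, 's::semiring_1) semimodule
     \<Rightarrow> ('m, 's) semimodule \<Rightarrow> bool" where
  "normally_M_projective _ P M \<longleftrightarrow>
     (\<forall>(N::('n, 's) semimodule) f g. semimodule N \<longrightarrow> normal_epi M N f \<longrightarrow> g \<in> car (Hom P N) \<longrightarrow>
        (\<exists>h\<in>car (Hom P M). postcomp P f h = g \<and>
           (\<forall>h'\<in>car (Hom P M). postcomp P f h' = g \<longrightarrow>
              (\<exists>h1\<in>car (Hom P M). \<exists>h2\<in>car (Hom P M).
                 postcomp P f h1 = zer (Hom P N) \<and> postcomp P f h2 = zer (Hom P N) \<and>
                 add (Hom P M) h h1 = add (Hom P M) h' h2))))"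

definition normally_projective :: "'m itself \<Rightarrow> 'n itself \<Rightarrow> ('p, 's::semiring_1) semimodule \<Rightarrow> bool" where
  "normally_projective _ tn P \<longleftrightarrow>
     (\<forall>M::('m, 's) semimodule. semimodule M \<longrightarrow> normally_M_projective tn P M)"

end

theory Submission
  imports Defs
begin

lemma cm_facts:
  assumes "comm_monoid_on A"
  shows "zer A \<in> car A"
    "\<And>x y. x \<in> car A \<Longrightarrow> y \<in> car A \<Longrightarrow> add A x y \<in> car A"
    "\<And>x y z. x \<in> car A \<Longrightarrow> y \<in> car A \<Longrightarrow> z \<in> car A \<Longrightarrow> add A (add A x y) z = add A x (add A y z)"
    "\<And>x y. x \<in> car A \<Longrightarrow> y \<in> car A \<Longrightarrow> add A x y = add A y x"
    "\<And>x. x \<in> car A \<Longrightarrow> add A (zer A) x = x"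
    "\<And>x. x \<in> car A \<Longrightarrow> add A x (zer A) = x"
  using assms unfolding comm_monoid_on_def by metis+

lemma cm_swap:
  assumes "comm_monoid_on A" "a \<in> car A" "b \<in> car A" "c \<in> car A" "d \<in> car A"
  shows "add A (add A a b) (add A c d) = add A (add A a c) (add A b d)"
proof -
  note f = cm_facts[OF assms(1)]
  have "add A (add A a b) (add A c d) = add A a (add A b (add A c d))" using assms f by simp
  also have "add A b (add A c d) = add A c (add A b d)"
    using assms f by (metis (no_types))
  also have "add A a (add A c (add A b d)) = add A (add A a c) (add A b d)" using assms f by simp
  finally show ?thesis .
qed

lemma sm_facts:
  assumes "semimodule M"
  shows "comm_monoid_on M"
    "\<And>s x. x \<in> car M \<Longrightarrow> smult M s x \<in> car M"
    "\<And>s x y. x \<in> car M \<Longrightarrow> y \<in> car M \<Longrightarrow> smult M s (add M x y) = add M (smult M s x) (smult M s y)"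
    "\<And>x. x \<in> car M \<Longrightarrow> smult M 0 x = zer M"
    "\<And>s. smult M s (zer M) = zer M"
  using assms unfolding semimodule_def by metis+

lemma slinear_zero:
  assumes "semimodule P" "semimodule X" "slinear P X h"
  shows "h (zer P) = zer X"
proof -
  have z: "zer P \<in> car P" using sm_facts(1)[OF assms(1)] cm_facts(1) by blast
  have "h (smult P 0 (zer P)) = smult X 0 (h (zer P))" using assms(3) z unfolding slinear_def by blast
  moreover have "h (zer P) \<in> car X" using assms(3) z unfolding slinear_def by blast
  ultimately show ?thesis using sm_facts(4)[OF assms(1) z] sm_facts(4)[OF assms(2)] by simp
qed

lemma Hom_simps:
  "car (Hom P X) = {h. slinear P X h \<and> h \<in> extensional (car P)}"
  "add (Hom P X) = (\<lambda>h k. \<lambda>x\<in>car P. add X (h x) (k x))"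
  "zer (Hom P X) = (\<lambda>x\<in>car P. zer X)"
  unfolding Hom_def by simp_all

lemma slinear_add:
  assumes "semimodule P" "semimodule X" "slinear P X h" "slinear P X k"
  shows "slinear P X (\<lambda>x\<in>car P. add X (h x) (k x))"
proof -
  note cP = cm_facts[OF sm_facts(1)[OF assms(1)]]
  note cX = cm_facts[OF sm_facts(1)[OF assms(2)]]
  note sX = sm_facts[OF assms(2)]
  note sP = sm_facts[OF assms(1)]
  have hc: "\<And>x. x \<in> car P \<Longrightarrow> h x \<in> car X" "\<And>x. x \<in> car P \<Longrightarrow> k x \<in> car X"
    using assms(3,4) unfolding slinear_def by auto
  have ha: "\<And>x y. x \<in> car P \<Longrightarrow> y \<in> car P \<Longrightarrow> h (add P x y) = add X (h x) (h y)"
     "\<And>x y. x \<in> car P \<Longrightarrow> y \<in> car P \<Longrightarrow> k (add P x y) = add X (k x) (k y)"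
    using assms(3,4) unfolding slinear_def by auto
  have hs: "\<And>s x. x \<in> car P \<Longrightarrow> h (smult P s x) = smult X s (h x)"
     "\<And>s x. x \<in> car P \<Longrightarrow> k (smult P s x) = smult X s (k x)"
    using assms(3,4) unfolding slinear_def by auto
  show ?thesis unfolding slinear_def
    using hc ha hs cP cX sX sP cm_swap[OF sm_facts(1)[OF assms(2)]] by (auto simp: Pi_def)
qed

lemma slinear_zero_map:
  assumes "semimodule P" "semimodule X"
  shows "slinear P X (\<lambda>x\<in>car P. zer X)"
  using cm_facts[OF sm_facts(1)[OF assms(1)]] cm_facts[OF sm_facts(1)[OF assms(2)]]
    sm_facts[OF assms(1)] sm_facts[OF assms(2)]
  unfolding slinear_def by auto

lemma Hom_monoid:
  assumes "semimodule P" "semimodule X"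
  shows "comm_monoid_on (Hom P X)"
proof -
  note cX = cm_facts[OF sm_facts(1)[OF assms(2)]]
  have hc: "\<And>h x. h \<in> car (Hom P X) \<Longrightarrow> x \<in> car P \<Longrightarrow> h x \<in> car X"
    unfolding Hom_simps slinear_def by auto
  have ext: "\<And>h. h \<in> car (Hom P X) \<Longrightarrow> h \<in> extensional (car P)"
    unfolding Hom_simps by auto
  show ?thesis unfolding comm_monoid_on_def
  proof (intro conjI ballI)
    show "zer (Hom P X) \<in> car (Hom P X)" unfolding Hom_simps using slinear_zero_map[OF assms] by auto
  next
    fix x y assume "x \<in> car (Hom P X)" "y \<in> car (Hom P X)"
    then show "add (Hom P X) x y \<in> car (Hom P X)"
      unfolding Hom_simps using slinear_add[OF assms] by auto
  next
    fix x y z assume a: "x \<in> car (Hom P X)" "y \<in> car (Hom P X)" "z \<in> car (Hom P X)"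
    show "add (Hom P X) (add (Hom P X) x y) z = add (Hom P X) x (add (Hom P X) y z)"
      unfolding Hom_simps using a hc cX by (auto intro!: restrict_ext)
  next
    fix x y assume a: "x \<in> car (Hom P X)" "y \<in> car (Hom P X)"
    show "add (Hom P X) x y = add (Hom P X) y x"
      unfolding Hom_simps using a hc cX by (auto intro!: restrict_ext)
  next
    fix x assume a: "x \<in> car (Hom P X)"
    show "add (Hom P X) (zer (Hom P X)) x = x"
      unfolding Hom_simps using ext[OF a] by (intro extensionalityI[of _ "car P"]) (auto simp: cX(5)[OF hc[OF a]])
  qed
qed

lemma slinear_comp:
  assumes "semimodule A" "slinear A B f" "slinear B C g"
  shows "slinear A C (\<lambda>x\<in>car A. g (f x))"
  using assms(2,3) cm_facts(2)[OF sm_facts(1)[OF assms(1)]] sm_facts(2)[OF assms(1)]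
  unfolding slinear_def by (auto simp: Pi_def)

lemma postcomp_car:
  assumes "semimodule P" "slinear M N f" "h \<in> car (Hom P M)"
  shows "postcomp P f h \<in> car (Hom P N)"
  using assms slinear_comp[of P M h N f] unfolding Hom_simps postcomp_def by auto

lemma postcomp_hom:
  assumes "semimodule P" "semimodule M" "semimodule N" "slinear M N f"
  shows "mon_hom (Hom P M) (Hom P N) (postcomp P f)"
proof -
  have hc: "\<And>h x. h \<in> car (Hom P M) \<Longrightarrow> x \<in> car P \<Longrightarrow> h x \<in> car M"
    unfolding Hom_simps slinear_def by auto
  have fa: "\<And>x y. x \<in> car M \<Longrightarrow> y \<in> car M \<Longrightarrow> f (add M x y) = add N (f x) (f y)"
    using assms(4) unfolding slinear_def by auto
  show ?thesis unfolding mon_hom_def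
  proof (intro conjI ballI)
    show "postcomp P f \<in> car (Hom P M) \<rightarrow> car (Hom P N)" using postcomp_car[OF assms(1,4)] by auto
  next
    fix x y assume a: "x \<in> car (Hom P M)" "y \<in> car (Hom P M)"
    show "postcomp P f (add (Hom P M) x y) = add (Hom P N) (postcomp P f x) (postcomp P f y)"
      unfolding Hom_simps postcomp_def using a hc fa by (auto intro!: restrict_ext)
  next
    show "postcomp P f (zer (Hom P M)) = zer (Hom P N)"
      unfolding Hom_simps postcomp_def using slinear_zero[OF assms(2,3,4)] by (auto intro!: restrict_ext)
  qed
qed


lemma Hom_mem:
  "h \<in> car (Hom P X) \<longleftrightarrow> slinear P X h \<and> h \<in> extensional (car P)"
  unfolding Hom_simps by simp

lemma Hom_val:
  "h \<in> car (Hom P X) \<Longrightarrow> x \<in> car P \<Longrightarrow> h x \<in> car X"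
  unfolding Hom_mem slinear_def by auto

lemma Ker_Hom_add:
  assumes "semimodule P" "semimodule M" "semimodule N" "slinear M N g"
    "k1 \<in> Ker (Hom P M) (Hom P N) (postcomp P g)" "k2 \<in> Ker (Hom P M) (Hom P N) (postcomp P g)"
  shows "add (Hom P M) k1 k2 \<in> Ker (Hom P M) (Hom P N) (postcomp P g)"
proof -
  note mh = postcomp_hom[OF assms(1-4)]
  have c: "k1 \<in> car (Hom P M)" "k2 \<in> car (Hom P M)" and z: "postcomp P g k1 = zer (Hom P N)" "postcomp P g k2 = zer (Hom P N)"
    using assms(5,6) unfolding Ker_def by auto
  have "add (Hom P M) k1 k2 \<in> car (Hom P M)" using Hom_monoid[OF assms(1,2)] c unfolding comm_monoid_on_def by blast
  moreover have "postcomp P g (add (Hom P M) k1 k2) = zer (Hom P N)"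
    using mh c z cm_facts(5)[OF Hom_monoid[OF assms(1,3)]] cm_facts(1)[OF Hom_monoid[OF assms(1,3)]]
    unfolding mon_hom_def by simp
  ultimately show ?thesis unfolding Ker_def by simp
qed

lemma norm_imp_e:
  fixes P :: "('p, 's::semiring_1) semimodule" and M :: "('m, 's) semimodule"
  assumes sP: "semimodule P" and sM: "semimodule M" and nP: "normally_M_projective TYPE('n) P M"
  shows "M_e_projective TYPE('l) TYPE('n) P M"
  unfolding M_e_projective_def
proof (intro allI impI)
  fix L :: "('l, 's) semimodule" and N :: "('n, 's) semimodule" and f g
  assume ses: "ses_sm L M N f g"
  have sL: "semimodule L" and sN: "semimodule N" and lf: "slinear L M f" and lg: "slinear M N g"
    and inj: "inj_on f (car L)" and im: "f ` car L = Ker M N g" and sur: "g ` car M = car N"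
    and kn: "k_normal M N g"
    using ses unfolding ses_sm_def exact_conds_def by auto
  have ne: "normal_epi M N g" unfolding normal_epi_def using lg sur kn by simp
  note HL = Hom_monoid[OF sP sL] and HM = Hom_monoid[OF sP sM] and HN = Hom_monoid[OF sP sN]
  note mf = postcomp_hom[OF sP sL sM lf] and mg = postcomp_hom[OF sP sM sN lg]
  have inj2: "inj_on (postcomp P f) (car (Hom P L))"
  proof (rule inj_onI)
    fix h k assume h: "h \<in> car (Hom P L)" and k: "k \<in> car (Hom P L)" and e: "postcomp P f h = postcomp P f k"
    show "h = k"
    proof (rule extensionalityI[of _ "car P"])
      show "h \<in> extensional (car P)" "k \<in> extensional (car P)" using h k Hom_mem by auto
      fix x assume x: "x \<in> car P"
      have "f (h x) = f (k x)" using fun_cong[OF e, of x] x unfolding postcomp_def by simp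
      then show "h x = k x" using inj Hom_val[OF h x] Hom_val[OF k x] unfolding inj_on_def by blast
    qed
  qed
  have im2: "postcomp P f ` car (Hom P L) = Ker (Hom P M) (Hom P N) (postcomp P g)"
  proof
    show "postcomp P f ` car (Hom P L) \<subseteq> Ker (Hom P M) (Hom P N) (postcomp P g)"
    proof
      fix u assume "u \<in> postcomp P f ` car (Hom P L)"
      then obtain h where h: "h \<in> car (Hom P L)" and u: "u = postcomp P f h" by blast
      have uc: "u \<in> car (Hom P M)" using postcomp_car[OF sP lf h] u by simp
      have "postcomp P g u = zer (Hom P N)"
      proof -
        have "\<And>x. x \<in> car P \<Longrightarrow> g (f (h x)) = zer N"
        proof -
          fix x assume "x \<in> car P"
          then have "f (h x) \<in> Ker M N g" using im Hom_val[OF h] by blast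
          then show "g (f (h x)) = zer N" unfolding Ker_def by simp
        qed
        then show ?thesis unfolding u postcomp_def Hom_simps by (auto intro!: restrict_ext)
      qed
      then show "u \<in> Ker (Hom P M) (Hom P N) (postcomp P g)" using uc unfolding Ker_def by simp
    qed
  next
    show "Ker (Hom P M) (Hom P N) (postcomp P g) \<subseteq> postcomp P f ` car (Hom P L)"
    proof
      fix u assume "u \<in> Ker (Hom P M) (Hom P N) (postcomp P g)"
      then have uc: "u \<in> car (Hom P M)" and uz: "postcomp P g u = zer (Hom P N)" unfolding Ker_def by auto
      have uk: "\<And>x. x \<in> car P \<Longrightarrow> u x \<in> f ` car L"
      proof -
        fix x assume x: "x \<in> car P"
        have "g (u x) = zer N" using fun_cong[OF uz, of x] x unfolding postcomp_def Hom_simps by simp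
        then show "u x \<in> f ` car L" using im Hom_val[OF uc x] unfolding Ker_def by blast
      qed
      define h where "h = (\<lambda>x\<in>car P. inv_into (car L) f (u x))"
      have hc: "\<And>x. x \<in> car P \<Longrightarrow> h x \<in> car L" unfolding h_def using uk by (auto intro: inv_into_into)
      have fh: "\<And>x. x \<in> car P \<Longrightarrow> f (h x) = u x" unfolding h_def using uk by (auto intro: f_inv_into_f)
      have ul: "slinear P M u" using uc Hom_mem by auto
      have "slinear P L h" unfolding slinear_def
      proof (intro conjI ballI allI)
        show "h \<in> car P \<rightarrow> car L" using hc by auto
      next
        fix x y assume x: "x \<in> car P" and y: "y \<in> car P"
        have xy: "add P x y \<in> car P" using x y cm_facts(2)[OF sm_facts(1)[OF sP]] by blast
        have a: "add L (h x) (h y) \<in> car L" using hc x y cm_facts(2)[OF sm_facts(1)[OF sL]] by blast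
        have "f (h (add P x y)) = f (add L (h x) (h y))"
          using fh[OF xy] fh[OF x] fh[OF y] ul x y lf hc unfolding slinear_def by simp
        then show "h (add P x y) = add L (h x) (h y)" using inj hc[OF xy] a unfolding inj_on_def by blast
      next
        fix s x assume x: "x \<in> car P"
        have xy: "smult P s x \<in> car P" using x sm_facts(2)[OF sP] by blast
        have a: "smult L s (h x) \<in> car L" using hc x sm_facts(2)[OF sL] by blast
        have "f (h (smult P s x)) = f (smult L s (h x))"
          using fh[OF xy] fh[OF x] ul x lf hc unfolding slinear_def by simp
        then show "h (smult P s x) = smult L s (h x)" using inj hc[OF xy] a unfolding inj_on_def by blast
      qed
      then have hH: "h \<in> car (Hom P L)" unfolding Hom_mem h_def by simp
      have "postcomp P f h = u"
      proof (rule extensionalityI[of _ "car P"])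
        show "postcomp P f h \<in> extensional (car P)" unfolding postcomp_def by simp
        show "u \<in> extensional (car P)" using uc Hom_mem by auto
        fix x assume "x \<in> car P" then show "postcomp P f h x = u x" using fh unfolding postcomp_def by simp
      qed
      then show "u \<in> postcomp P f ` car (Hom P L)" using hH by blast
    qed
  qed
  have nP': "\<And>gg. gg \<in> car (Hom P N) \<Longrightarrow> (\<exists>h\<in>car (Hom P M). postcomp P g h = gg \<and>
           (\<forall>h'\<in>car (Hom P M). postcomp P g h' = gg \<longrightarrow>
              (\<exists>h1\<in>car (Hom P M). \<exists>h2\<in>car (Hom P M).
                 postcomp P g h1 = zer (Hom P N) \<and> postcomp P g h2 = zer (Hom P N) \<and>
                 add (Hom P M) h h1 = add (Hom P M) h' h2)))"
    using nP sN ne unfolding normally_M_projective_def by blast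
  have sur2: "postcomp P g ` car (Hom P M) = car (Hom P N)"
  proof
    show "postcomp P g ` car (Hom P M) \<subseteq> car (Hom P N)" using postcomp_car[OF sP lg] by auto
    show "car (Hom P N) \<subseteq> postcomp P g ` car (Hom P M)" using nP' by blast
  qed
  have kn2: "k_normal (Hom P M) (Hom P N) (postcomp P g)"
    unfolding k_normal_def
  proof (intro ballI impI)
    fix h h' assume h: "h \<in> car (Hom P M)" and h': "h' \<in> car (Hom P M)" and e: "postcomp P g h = postcomp P g h'"
    have gg: "postcomp P g h \<in> car (Hom P N)" using postcomp_car[OF sP lg h] .
    obtain h0 where h0: "h0 \<in> car (Hom P M)" and
      A: "\<forall>h'\<in>car (Hom P M). postcomp P g h' = postcomp P g h \<longrightarrow>
              (\<exists>h1\<in>car (Hom P M). \<exists>h2\<in>car (Hom P M).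
                 postcomp P g h1 = zer (Hom P N) \<and> postcomp P g h2 = zer (Hom P N) \<and>
                 add (Hom P M) h0 h1 = add (Hom P M) h' h2)"
      using nP'[OF gg] by blast
    obtain a1 a2 where a: "a1 \<in> Ker (Hom P M) (Hom P N) (postcomp P g)" "a2 \<in> Ker (Hom P M) (Hom P N) (postcomp P g)"
       "add (Hom P M) h0 a1 = add (Hom P M) h a2"
      using A h unfolding Ker_def by blast
    have Bx: "\<exists>h1\<in>car (Hom P M). \<exists>h2\<in>car (Hom P M).
                 postcomp P g h1 = zer (Hom P N) \<and> postcomp P g h2 = zer (Hom P N) \<and>
                 add (Hom P M) h0 h1 = add (Hom P M) h' h2"
      using bspec[OF A h'] e by simp
    obtain b1 b2 where b: "b1 \<in> Ker (Hom P M) (Hom P N) (postcomp P g)" "b2 \<in> Ker (Hom P M) (Hom P N) (postcomp P g)"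
       "add (Hom P M) h0 b1 = add (Hom P M) h' b2"
      using Bx unfolding Ker_def by blast
    have kc: "a1 \<in> car (Hom P M)" "a2 \<in> car (Hom P M)" "b1 \<in> car (Hom P M)" "b2 \<in> car (Hom P M)"
      using a b unfolding Ker_def by auto
    note c = cm_facts[OF HM]
    have "add (Hom P M) h (add (Hom P M) a2 b1) = add (Hom P M) (add (Hom P M) h a2) b1"
      using c h kc by simp
    also have "\<dots> = add (Hom P M) (add (Hom P M) h0 a1) b1" using a by simp
    also have "\<dots> = add (Hom P M) h0 (add (Hom P M) a1 b1)" using c(3)[OF h0 kc(1) kc(3)] .
    also have "\<dots> = add (Hom P M) h0 (add (Hom P M) b1 a1)" using c(4)[OF kc(1) kc(3)] by simp
    also have "\<dots> = add (Hom P M) (add (Hom P M) h0 b1) a1" using c(3)[OF h0 kc(3) kc(1)] by simp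
    also have "\<dots> = add (Hom P M) (add (Hom P M) h' b2) a1" using b by simp
    also have "\<dots> = add (Hom P M) h' (add (Hom P M) b2 a1)" using c h' kc by simp
    finally show "\<exists>k\<in>Ker (Hom P M) (Hom P N) (postcomp P g). \<exists>k'\<in>Ker (Hom P M) (Hom P N) (postcomp P g).
          add (Hom P M) h k = add (Hom P M) h' k'"
      using Ker_Hom_add[OF sP sM sN lg a(2) b(1)] Ker_Hom_add[OF sP sM sN lg b(2) a(1)] by blast
  qed
  show "ses_mon (Hom P L) (Hom P M) (Hom P N) (postcomp P f) (postcomp P g)"
    unfolding ses_mon_def exact_conds_def using HL HM HN mf mg inj2 im2 sur2 kn2 by blast
qed


lemma e_imp_norm:
  fixes P :: "('p, 's::semiring_1) semimodule" and M :: "('m, 's) semimodule"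
  assumes sP: "semimodule P" and sM: "semimodule M" and eP: "M_e_projective TYPE('m) TYPE('n) P M"
  shows "normally_M_projective TYPE('n) P M"
  unfolding normally_M_projective_def
proof (intro allI impI)
  fix N :: "('n, 's) semimodule" and f g
  assume sN: "semimodule N" and ne: "normal_epi M N f" and gH: "g \<in> car (Hom P N)"
  have lf: "slinear M N f" and sur: "f ` car M = car N" and kn: "k_normal M N f"
    using ne unfolding normal_epi_def by auto
  define L where "L = M\<lparr>car := Ker M N f\<rparr>"
  have KM: "Ker M N f \<subseteq> car M" unfolding Ker_def by auto
  note cM = cm_facts[OF sm_facts(1)[OF sM]] and cN = cm_facts[OF sm_facts(1)[OF sN]]
  have fz: "f (zer M) = zer N" using slinear_zero[OF sM sN lf] .
  have kz: "zer M \<in> Ker M N f" unfolding Ker_def using fz cM by simp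
  have ka: "\<And>x y. x \<in> Ker M N f \<Longrightarrow> y \<in> Ker M N f \<Longrightarrow> add M x y \<in> Ker M N f"
    using lf cM cN unfolding Ker_def slinear_def by auto
  have ks: "\<And>s x. x \<in> Ker M N f \<Longrightarrow> smult M s x \<in> Ker M N f"
    using lf sm_facts(2,5)[OF sM] sm_facts(5)[OF sN] unfolding Ker_def slinear_def by auto
  have Ls: "car L = Ker M N f" "add L = add M" "zer L = zer M" "smult L = smult M"
    unfolding L_def by simp_all
  have sL: "semimodule L"
    using sM KM kz ka ks unfolding semimodule_def comm_monoid_on_def Ls by (meson subsetD)
  have ses: "ses_sm L M N id f"
    unfolding ses_sm_def exact_conds_def
    using sL sM sN lf sur kn KM unfolding slinear_def L_def by auto
  have sm: "ses_mon (Hom P L) (Hom P M) (Hom P N) (postcomp P id) (postcomp P f)"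
    using eP ses unfolding M_e_projective_def by blast
  have sur2: "postcomp P f ` car (Hom P M) = car (Hom P N)" and kn2: "k_normal (Hom P M) (Hom P N) (postcomp P f)"
    using sm unfolding ses_mon_def exact_conds_def by auto
  obtain h where h: "h \<in> car (Hom P M)" "postcomp P f h = g" using gH sur2 by force
  show "\<exists>h\<in>car (Hom P M). postcomp P f h = g \<and>
           (\<forall>h'\<in>car (Hom P M). postcomp P f h' = g \<longrightarrow>
              (\<exists>h1\<in>car (Hom P M). \<exists>h2\<in>car (Hom P M).
                 postcomp P f h1 = zer (Hom P N) \<and> postcomp P f h2 = zer (Hom P N) \<and>
                 add (Hom P M) h h1 = add (Hom P M) h' h2))"
  proof (rule bexI[OF _ h(1)], intro conjI ballI impI)
    show "postcomp P f h = g" by (rule h(2))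
    fix h' assume h': "h' \<in> car (Hom P M)" and e: "postcomp P f h' = g"
    obtain k k' where "k \<in> Ker (Hom P M) (Hom P N) (postcomp P f)" "k' \<in> Ker (Hom P M) (Hom P N) (postcomp P f)"
      "add (Hom P M) h k = add (Hom P M) h' k'"
      using kn2 h h' e unfolding k_normal_def by metis
    then show "\<exists>h1\<in>car (Hom P M). \<exists>h2\<in>car (Hom P M).
                 postcomp P f h1 = zer (Hom P N) \<and> postcomp P f h2 = zer (Hom P N) \<and>
                 add (Hom P M) h h1 = add (Hom P M) h' h2"
      unfolding Ker_def by blast
  qed
qed

theorem mainTheorem6:
  fixes P :: "('p, 's::semiring_1) semimodule"
  assumes "semimodule P"
  shows "(\<forall>M::('m, 's) semimodule. semimodule M \<longrightarrow>
            (normally_M_projective TYPE('n) P M \<longrightarrow> M_e_projective TYPE('l) TYPE('n) P M) \<and>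
            (M_e_projective TYPE('m) TYPE('n) P M \<longrightarrow> normally_M_projective TYPE('n) P M)) \<and>
         (normally_projective TYPE('m) TYPE('n) P \<longrightarrow> e_projective TYPE('l) TYPE('m) TYPE('n) P) \<and>
         (e_projective TYPE('m) TYPE('m) TYPE('n) P \<longrightarrow> normally_projective TYPE('m) TYPE('n) P)"
proof (intro conjI allI impI)
  fix M :: "('m, 's) semimodule" assume "semimodule M"
  show "normally_M_projective TYPE('n) P M \<Longrightarrow> M_e_projective TYPE('l) TYPE('n) P M"
    using norm_imp_e[OF assms \<open>semimodule M\<close>] by blast
  show "M_e_projective TYPE('m) TYPE('n) P M \<Longrightarrow> normally_M_projective TYPE('n) P M"
    using e_imp_norm[OF assms \<open>semimodule M\<close>] by blast
next
  assume "normally_projective TYPE('m) TYPE('n) P"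
  then show "e_projective TYPE('l) TYPE('m) TYPE('n) P"
    unfolding normally_projective_def e_projective_def using norm_imp_e[OF assms] by blast
next
  assume "e_projective TYPE('m) TYPE('m) TYPE('n) P"
  then show "normally_projective TYPE('m) TYPE('n) P"
    unfolding normally_projective_def e_projective_def using e_imp_norm[OF assms] by blast
qed

end
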